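(* Let $s\in C$ and let $\hat\kappa$ be a prime broadcast center of $T$ under $s$. Then for every $x\in V(T)\setminus\{\hat\kappa\}$, $$b^s(x,T)=d_{x,\hat\kappa}\cdot\rho+\tilde w^s_{x,\hat\kappa}+b^s(\hat\kappa,\bar T_{\hat\kappa,x}).$$
   Context: $T$ is a finite tree with vertex set $V(T)$, $|V(T)|=n$, and edge set $E(T)$. Each edge $(u,v)$ carries an interval $[w^-_{u,v},w^+_{u,v}]$ of non-negative reals. A scenario $s$ assigns to every edge $(u,v)$ a weight $w^s_{u,v}\in[w^-_{u,v},w^+_{u,v}]$; $C$ is the set of all scenarios. A constant $\rho>0$ is fixed. Broadcast time (postal model): for a subtree $G$ of $T$ and $u\in V(G)$, $b^s(u,G)=0$ if $u$ has no neighbour in $G$; otherwise, if $v_1,\dots,v_h$ are the neighbours of $u$ in $G$ and $G_{v}$ is the component of $G-u$ containing $v$, $b^s(u,G)=\min_{\pi}\max_{1\le k\le h}\big(k\rho+w^s_{u,v_{\pi(k)}}+b^s(v_{\pi(k)},G_{v_{\pi(k)}})\big)$ over permutations $\pi$ of $\{1,\dots,h\}$. $B^s=\{u: b^s(u,T)\le b^s(v,T)\ \forall v\in V(T)\}$. For distinct $x,y$, $T_{x,y}$ is the component of $T-x$ containing $y$, and $\bar T_{x,y}$ is the subtree induced by $V(T)\setminus V(T_{x,y})$. A vertex $\hat\kappa\in B^s$ is a prime broadcast center under $s$ if $b^s(\hat\kappa,\bar T_{\hat\kappa,u})\ge b^s(u,\bar T_{u,\hat\kappa})$ for every neighbour $u$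 of $\hat\kappa$. $P_{x,y}$ is the set of edges of the $x$–$y$ path in $T$, $d_{x,y}=|P_{x,y}|$, and $\tilde w^s_{x,y}=\sum_{(u,v)\in P_{x,y}}w^s_{u,v}$. *)

theory Defs
  imports Complex_Main
begin

text \<open>The tree T is given by a finite vertex set V and a symmetric, irreflexive
adjacency relation E on V.  Subtrees G of T are represented by their vertex sets
(the subgraph of T induced on them).\<close>

definition adj_in :: "('a \<Rightarrow> 'a \<Rightarrow> bool) \<Rightarrow> 'a set \<Rightarrow> 'a \<Rightarrow> 'a \<Rightarrow> bool" where
  "adj_in E A = (\<lambda>a b. a \<in> A \<and> b \<in> A \<and> E a b)"

definition comp :: "('a \<Rightarrow> 'a \<Rightarrow> bool) \<Rightarrow> 'a set \<Rightarrow> 'a \<Rightarrow> 'a set" where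
  "comp E A v = {x. (adj_in E A)\<^sup>*\<^sup>* v x}"

definition is_tree :: "('a \<Rightarrow> 'a \<Rightarrow> bool) \<Rightarrow> 'a set \<Rightarrow> bool" where
  "is_tree E V \<longleftrightarrow> finite V \<and> V \<noteq> {}
     \<and> (\<forall>a b. E a b \<longrightarrow> a \<in> V \<and> b \<in> V \<and> a \<noteq> b \<and> E b a)
     \<and> (\<forall>a\<in>V. \<forall>b\<in>V. (adj_in E V)\<^sup>*\<^sup>* a b)
     \<and> card {{a, b} | a b. E a b} = card V - 1"

text \<open>Broadcast time, computed with a fuel argument n (the recursion on subtrees
strictly decreases the number of vertices, so fuel card S suffices).
Permutations of the neighbours v_1..v_h are bijections sigma from the neighbour
set onto {1..h}; sigma v is the position k at which v is informed.\<close>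
primrec bt :: "('a \<Rightarrow> 'a \<Rightarrow> bool) \<Rightarrow> ('a \<Rightarrow> 'a \<Rightarrow> real) \<Rightarrow> real \<Rightarrow> nat \<Rightarrow> 'a \<Rightarrow> 'a set \<Rightarrow> real" where
  "bt E w \<rho> 0 u S = 0"
| "bt E w \<rho> (Suc n) u S =
     (let N = {v \<in> S. E u v} in
      if N = {} then 0
      else Min {Max ((\<lambda>v. real (\<sigma> v) * \<rho> + w u v + bt E w \<rho> n v (comp E (S - {u}) v)) ` N)
                 | \<sigma>. bij_betw \<sigma> N {1..card N}})"

definition bcast :: "('a \<Rightarrow> 'a \<Rightarrow> bool) \<Rightarrow> ('a \<Rightarrow> 'a \<Rightarrow> real) \<Rightarrow> real \<Rightarrow> 'a \<Rightarrow> 'a set \<Rightarrow> real" where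
  "bcast E w \<rho> u S = bt E w \<rho> (card S) u S"

definition Tsub :: "('a \<Rightarrow> 'a \<Rightarrow> bool) \<Rightarrow> 'a set \<Rightarrow> 'a \<Rightarrow> 'a \<Rightarrow> 'a set" where
  "Tsub E V x y = comp E (V - {x}) y"

definition Tbar :: "('a \<Rightarrow> 'a \<Rightarrow> bool) \<Rightarrow> 'a set \<Rightarrow> 'a \<Rightarrow> 'a \<Rightarrow> 'a set" where
  "Tbar E V x y = V - Tsub E V x y"

definition scenario :: "('a \<Rightarrow> 'a \<Rightarrow> bool) \<Rightarrow> ('a \<Rightarrow> 'a \<Rightarrow> real) \<Rightarrow> ('a \<Rightarrow> 'a \<Rightarrow> real) \<Rightarrow> ('a \<Rightarrow> 'a \<Rightarrow> real) \<Rightarrow> bool" where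
  "scenario E wlo whi w \<longleftrightarrow> (\<forall>a b. E a b \<longrightarrow> wlo a b \<le> w a b \<and> w a b \<le> whi a b \<and> w a b = w b a)"

definition bcenters :: "('a \<Rightarrow> 'a \<Rightarrow> bool) \<Rightarrow> ('a \<Rightarrow> 'a \<Rightarrow> real) \<Rightarrow> real \<Rightarrow> 'a set \<Rightarrow> 'a set" where
  "bcenters E w \<rho> V = {u \<in> V. \<forall>v\<in>V. bcast E w \<rho> u V \<le> bcast E w \<rho> v V}"

definition prime_center :: "('a \<Rightarrow> 'a \<Rightarrow> bool) \<Rightarrow> ('a \<Rightarrow> 'a \<Rightarrow> real) \<Rightarrow> real \<Rightarrow> 'a set \<Rightarrow> 'a \<Rightarrow> bool" where
  "prime_center E w \<rho> V k \<longleftrightarrow> k \<in> bcenters E w \<rho> V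
     \<and> (\<forall>u. E k u \<longrightarrow> bcast E w \<rho> k (Tbar E V k u) \<ge> bcast E w \<rho> u (Tbar E V u k))"

definition is_path :: "('a \<Rightarrow> 'a \<Rightarrow> bool) \<Rightarrow> 'a list \<Rightarrow> 'a \<Rightarrow> 'a \<Rightarrow> bool" where
  "is_path E xs x y \<longleftrightarrow> xs \<noteq> [] \<and> hd xs = x \<and> last xs = y \<and> distinct xs
     \<and> (\<forall>i < length xs - 1. E (xs ! i) (xs ! Suc i))"

definition tpath :: "('a \<Rightarrow> 'a \<Rightarrow> bool) \<Rightarrow> 'a \<Rightarrow> 'a \<Rightarrow> 'a list" where
  "tpath E x y = (THE xs. is_path E xs x y)"

definition tdist :: "('a \<Rightarrow> 'a \<Rightarrow> bool) \<Rightarrow> 'a \<Rightarrow> 'a \<Rightarrow> nat" where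
  "tdist E x y = length (tpath E x y) - 1"

definition pweight :: "('a \<Rightarrow> 'a \<Rightarrow> bool) \<Rightarrow> ('a \<Rightarrow> 'a \<Rightarrow> real) \<Rightarrow> 'a \<Rightarrow> 'a \<Rightarrow> real" where
  "pweight E w x y = (let xs = tpath E x y in
      (\<Sum>i<length xs - 1. w (xs ! i) (xs ! Suc i)))"

end

theory Submission
  imports Defs
begin


definition Fb :: "real \<Rightarrow> 'a set \<Rightarrow> ('a \<Rightarrow> real) \<Rightarrow> real" where
 "Fb \<rho> N g = (if N = {} then 0 else Min {Max ((\<lambda>v. real (\<sigma> v) * \<rho> + g v) ` N) | \<sigma>. bij_betw \<sigma> N {1..card N}})"

lemma bt_Suc_Fb: "bt E w \<rho> (Suc n) u S = Fb \<rho> {v\<in>S. E u v} (\<lambda>v. w u v + bt E w \<rho> n v (comp E (S - {u}) v))"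
  by (simp only: bt.simps Let_def Fb_def add.assoc)

lemma Fb_vals_finite:
  assumes "finite N"
  shows "finite {Max ((\<lambda>v. real (\<sigma> v) * \<rho> + g v) ` N) | \<sigma>. bij_betw \<sigma> N {1..card N}}"
proof (cases "N = {}")
  case True
  have "{Max ((\<lambda>v. real (\<sigma> v) * \<rho> + g v) ` N) | \<sigma>. bij_betw \<sigma> N {1..card N}} \<subseteq> {Max ({}::real set)}"
    using True by auto
  then show ?thesis by (rule finite_subset) auto
next
  case False
  have "{Max ((\<lambda>v. real (\<sigma> v) * \<rho> + g v) ` N) | \<sigma>. bij_betw \<sigma> N {1..card N}}
      \<subseteq> (\<lambda>(i,v). real i * \<rho> + g v) ` ({1..card N} \<times> N)"
  proof
    fix t assume "t \<in> {Max ((\<lambda>v. real (\<sigma> v) * \<rho> + g v) ` N) | \<sigma>. bij_betw \<sigma> N {1..card N}}"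
    then obtain \<sigma> where t: "t = Max ((\<lambda>v. real (\<sigma> v) * \<rho> + g v) ` N)" and b: "bij_betw \<sigma> N {1..card N}" by blast
    have "t \<in> (\<lambda>v. real (\<sigma> v) * \<rho> + g v) ` N" unfolding t using False assms by (intro Max_in) auto
    then obtain v where "v \<in> N" "t = real (\<sigma> v) * \<rho> + g v" by blast
    moreover have "\<sigma> v \<in> {1..card N}" using bij_betwE[OF b] \<open>v\<in>N\<close> by blast
    ultimately show "t \<in> (\<lambda>(i,v). real i * \<rho> + g v) ` ({1..card N} \<times> N)" by force
  qed
  then show ?thesis by (rule finite_subset) (use assms in auto)
qed

lemma Fb_vals_ne:
  assumes "finite N"
  shows "{Max ((\<lambda>v. real (\<sigma> v) * \<rho> + g v) ` N) | \<sigma>. bij_betw \<sigma> N {1..card N}} \<noteq> {}"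
proof -
  obtain h where "bij_betw h N {1..card N}" using finite_same_card_bij[of N "{1..card N}"] assms by auto
  then show ?thesis by blast
qed

lemma Fb_cong: "(\<And>v. v \<in> N \<Longrightarrow> g v = g' v) \<Longrightarrow> Fb \<rho> N g = Fb \<rho> N g'"
proof -
  assume h: "\<And>v. v \<in> N \<Longrightarrow> g v = g' v"
  have "\<And>\<sigma>. Max ((\<lambda>v. real (\<sigma> v) * \<rho> + g v) ` N) = Max ((\<lambda>v. real (\<sigma> v) * \<rho> + g' v) ` N)"
    by (intro arg_cong[where f=Max] image_cong) (auto simp: h)
  then show ?thesis unfolding Fb_def by simp
qed

lemma Fb_lower:
  assumes "finite N" "v \<in> N" "\<rho> \<ge> 0"
  shows "Fb \<rho> N g \<ge> \<rho> + g v"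
proof -
  have ne: "N \<noteq> {}" using assms by auto
  have "\<forall>t \<in> {Max ((\<lambda>v. real (\<sigma> v) * \<rho> + g v) ` N) | \<sigma>. bij_betw \<sigma> N {1..card N}}. t \<ge> \<rho> + g v"
  proof
    fix t assume "t \<in> {Max ((\<lambda>v. real (\<sigma> v) * \<rho> + g v) ` N) | \<sigma>. bij_betw \<sigma> N {1..card N}}"
    then obtain \<sigma> where t: "t = Max ((\<lambda>v. real (\<sigma> v) * \<rho> + g v) ` N)" and b: "bij_betw \<sigma> N {1..card N}" by blast
    have "\<sigma> v \<ge> 1" using bij_betwE[OF b] assms(2) by fastforce
    then have "real (\<sigma> v) * \<rho> \<ge> \<rho>" using assms(3) by (simp add: mult_le_cancel_right1)
    moreover have "real (\<sigma> v) * \<rho> + g v \<le> t" unfolding t using assms by (intro Max_ge) auto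
    ultimately show "t \<ge> \<rho> + g v" by linarith
  qed
  then show ?thesis unfolding Fb_def using ne Fb_vals_finite[OF assms(1)] Fb_vals_ne[OF assms(1)]
    by (simp add: Min_ge_iff)
qed

lemma Fb_nonneg:
  assumes "finite N" "\<rho> \<ge> 0" "\<And>v. v \<in> N \<Longrightarrow> g v \<ge> 0"
  shows "Fb \<rho> N g \<ge> 0"
proof (cases "N = {}")
  case True then show ?thesis by (simp add: Fb_def)
next
  case False
  then obtain v where "v \<in> N" by blast
  have "Fb \<rho> N g \<ge> \<rho> + g v" by (rule Fb_lower[OF assms(1) \<open>v\<in>N\<close> assms(2)])
  then show ?thesis using assms(2) assms(3)[of v] \<open>v\<in>N\<close> by linarith
qed

lemma bij_by_card:
  assumes "finite A" "inj_on f A" "f ` A \<subseteq> {1..n}" "card A = n"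
  shows "bij_betw f A {1..n}"
proof -
  have "card (f ` A) = card {1..n}" using assms card_image by auto
  then have "f ` A = {1..n}" using card_subset_eq[of "{1..n::nat}" "f ` A"] assms by auto
  then show ?thesis unfolding bij_betw_def using assms by auto
qed

lemma Fb_attained:
  assumes "finite N" "N \<noteq> {}"
  shows "\<exists>\<sigma>. bij_betw \<sigma> N {1..card N} \<and> Fb \<rho> N g = Max ((\<lambda>v. real (\<sigma> v) * \<rho> + g v) ` N)"
proof -
  define X where "X = {Max ((\<lambda>v. real (\<sigma> v) * \<rho> + g v) ` N) | \<sigma>. bij_betw \<sigma> N {1..card N}}"
  have "Fb \<rho> N g = Min X" unfolding Fb_def X_def using assms by simp
  moreover have "Min X \<in> X" unfolding X_def using Fb_vals_finite[OF assms(1)] Fb_vals_ne[OF assms(1)] by (rule Min_in)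
  ultimately have "Fb \<rho> N g \<in> X" by simp
  then show ?thesis unfolding X_def by blast
qed

lemma Fb_le_witness:
  assumes "finite N" "bij_betw \<sigma> N {1..card N}" "N \<noteq> {}"
  shows "Fb \<rho> N g \<le> Max ((\<lambda>v. real (\<sigma> v) * \<rho> + g v) ` N)"
proof (cases "N = {}")
  case True then show ?thesis using assms(3) by simp
next
  case False
  then show ?thesis unfolding Fb_def using Fb_vals_finite[OF assms(1)] assms(2)
    by (auto intro!: Min_le)
qed

lemma Fb_remove1:
  assumes "finite N" "a \<in> N" "\<rho> \<ge> 0" "\<And>v. v \<in> N \<Longrightarrow> g v \<ge> 0"
  shows "Fb \<rho> (N - {a}) g \<le> Fb \<rho> N g"
proof (cases "N - {a} = {}")
  case True
  then show ?thesis using Fb_nonneg[OF assms(1,3,4)] by (simp add: Fb_def)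
next
  case False
  obtain \<sigma> where b: "bij_betw \<sigma> N {1..card N}" and eq: "Fb \<rho> N g = Max ((\<lambda>v. real (\<sigma> v) * \<rho> + g v) ` N)"
  proof -
    have ne: "N \<noteq> {}" using assms(2) by blast
    from Fb_attained[OF assms(1) ne, of \<rho> g] obtain s where
      s: "bij_betw s N {1..card N} \<and> Fb \<rho> N g = Max ((\<lambda>v. real (s v) * \<rho> + g v) ` N)" ..
    from s show ?thesis by (elim conjE) (rule that)
  qed
  define \<tau> where "\<tau> v = (if \<sigma> v > \<sigma> a then \<sigma> v - 1 else \<sigma> v)" for v
  have inj: "inj_on \<sigma> N" and rng: "\<And>v. v \<in> N \<Longrightarrow> \<sigma> v \<in> {1..card N}" using bij_betw_imp_inj_on[OF b] bij_betwE[OF b] by auto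
  have cardm: "card (N - {a}) = card N - 1" using assms by simp
  have "bij_betw \<tau> (N - {a}) {1..card (N - {a})}"
  proof (rule bij_by_card)
    show "finite (N - {a})" using assms by simp
    show "inj_on \<tau> (N - {a})"
    proof (rule inj_onI)
      fix x y assume xy: "x \<in> N - {a}" "y \<in> N - {a}" "\<tau> x = \<tau> y"
      have "\<sigma> x \<noteq> \<sigma> a" "\<sigma> y \<noteq> \<sigma> a" using xy inj assms(2) by (metis DiffE inj_on_def singletonI)+
      then have "\<sigma> x = \<sigma> y" using xy(3) unfolding \<tau>_def by (auto split: if_splits)
      then show "x = y" using inj xy by (meson DiffD1 inj_on_def)
    qed
    show "\<tau> ` (N - {a}) \<subseteq> {1..card (N - {a})}"
    proof
      fix t assume "t \<in> \<tau> ` (N - {a})"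
      then obtain x where x: "x \<in> N - {a}" "t = \<tau> x" by blast
      have "\<sigma> x \<noteq> \<sigma> a" using x inj assms(2) by (metis DiffE inj_on_def singletonI)
      moreover have "\<sigma> x \<in> {1..card N}" "\<sigma> a \<in> {1..card N}" using rng x assms by auto
      ultimately show "t \<in> {1..card (N - {a})}" unfolding x \<tau>_def cardm by auto
    qed
  qed simp
  then have "Fb \<rho> (N - {a}) g \<le> Max ((\<lambda>v. real (\<tau> v) * \<rho> + g v) ` (N - {a}))"
    using assms False by (intro Fb_le_witness) auto
  also have "\<dots> \<le> Max ((\<lambda>v. real (\<sigma> v) * \<rho> + g v) ` N)"
  proof (rule Max.boundedI)
    show "finite ((\<lambda>v. real (\<tau> v) * \<rho> + g v) ` (N - {a}))" using assms by simp
    show "(\<lambda>v. real (\<tau> v) * \<rho> + g v) ` (N - {a}) \<noteq> {}" using False by simp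
    fix t assume "t \<in> (\<lambda>v. real (\<tau> v) * \<rho> + g v) ` (N - {a})"
    then obtain x where x: "x \<in> N - {a}" "t = real (\<tau> x) * \<rho> + g x" by blast
    have "\<tau> x \<le> \<sigma> x" unfolding \<tau>_def by auto
    then have "t \<le> real (\<sigma> x) * \<rho> + g x" unfolding x using assms(3) by (simp add: mult_right_mono)
    also have "\<dots> \<le> Max ((\<lambda>v. real (\<sigma> v) * \<rho> + g v) ` N)" using x assms by (intro Max_ge) auto
    finally show "t \<le> \<dots>" .
  qed
  finally show ?thesis using eq by simp
qed

lemma Fb_mono:
  assumes "finite N2" "N1 \<subseteq> N2" "\<rho> \<ge> 0" "\<And>v. v \<in> N2 \<Longrightarrow> g v \<ge> 0"
  shows "Fb \<rho> N1 g \<le> Fb \<rho> N2 g"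
proof -
  have "\<forall>N2. finite N2 \<longrightarrow> N1 \<subseteq> N2 \<longrightarrow> (\<forall>v\<in>N2. g v \<ge> 0) \<longrightarrow> card (N2 - N1) = k \<longrightarrow> Fb \<rho> N1 g \<le> Fb \<rho> N2 g" for k
  proof (induction k)
    case 0
    then show ?case by (metis Diff_eq_empty_iff card_0_eq finite_Diff order_antisym order_refl)
  next
    case (Suc k)
    show ?case
    proof (intro allI impI)
      fix N2 assume h: "finite N2" "N1 \<subseteq> N2" "\<forall>v\<in>N2. g v \<ge> 0" "card (N2 - N1) = Suc k"
      then obtain a where a: "a \<in> N2 - N1" by (metis card.empty empty_iff nat.distinct(1) subsetI subset_antisym)
      have c: "card (N2 - {a} - N1) = k"
      proof -
        have "N2 - {a} - N1 = (N2 - N1) - {a}" by blast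
        then show ?thesis using h a by simp
      qed
      have "Fb \<rho> N1 g \<le> Fb \<rho> (N2 - {a}) g"
        using Suc.IH h a c by auto
      also have "\<dots> \<le> Fb \<rho> N2 g" using Fb_remove1[OF h(1) _ assms(3)] a h(3) by blast
      finally show "Fb \<rho> N1 g \<le> Fb \<rho> N2 g" .
    qed
  qed
  then show ?thesis using assms by blast
qed

lemma Fb_add_first:
  assumes "finite N1" "a \<notin> N1" "\<rho> \<ge> 0" "Fb \<rho> N1 g \<le> g a"
  shows "Fb \<rho> (insert a N1) g = \<rho> + g a"
proof (rule antisym)
  show "\<rho> + g a \<le> Fb \<rho> (insert a N1) g" using assms by (intro Fb_lower) auto
next
  obtain \<sigma>1 where b1: "N1 \<noteq> {} \<Longrightarrow> bij_betw \<sigma>1 N1 {1..card N1} \<and> Fb \<rho> N1 g = Max ((\<lambda>v. real (\<sigma>1 v) * \<rho> + g v) ` N1)"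
  proof (cases "N1 = {}")
    case True then show ?thesis by (intro that) simp
  next
    case False
    from Fb_attained[OF assms(1) False, of \<rho> g] obtain s where
      s: "bij_betw s N1 {1..card N1} \<and> Fb \<rho> N1 g = Max ((\<lambda>v. real (s v) * \<rho> + g v) ` N1)" ..
    from s show ?thesis by (intro that[of s]) simp
  qed
  define \<sigma> where "\<sigma> v = (if v = a then 1 else Suc (\<sigma>1 v))" for v
  have cI: "card (insert a N1) = Suc (card N1)" using assms by simp
  have bs: "bij_betw \<sigma> (insert a N1) {1..card (insert a N1)}"
  proof (rule bij_by_card)
    show "finite (insert a N1)" using assms by simp
    show "inj_on \<sigma> (insert a N1)"
    proof (rule inj_onI)
      fix x y assume xy: "x \<in> insert a N1" "y \<in> insert a N1" "\<sigma> x = \<sigma> y"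
      show "x = y"
      proof (cases "x = a \<or> y = a")
        case True
        have r: "\<And>z. z \<in> N1 \<Longrightarrow> \<sigma>1 z \<ge> 1" using b1 bij_betwE
          by (metis atLeastAtMost_iff empty_iff)
        show ?thesis
        proof (rule ccontr)
          assume "x \<noteq> y"
          then consider "x = a" "y \<noteq> a" | "y = a" "x \<noteq> a" using True by blast
          then show False
          proof cases
            case 1
            then have "y \<in> N1" using xy by simp
            then show False using r[of y] xy(3) 1 unfolding \<sigma>_def by simp
          next
            case 2
            then have "x \<in> N1" using xy by simp
            then show False using r[of x] xy(3) 2 unfolding \<sigma>_def by simp
          qed
        qed
      next
        case False
        then have "x \<in> N1" "y \<in> N1" "\<sigma>1 x = \<sigma>1 y" using xy unfolding \<sigma>_def by auto
        then show ?thesis using b1 bij_betw_imp_inj_on inj_onD by (metis empty_iff)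
      qed
    qed
    show "\<sigma> ` insert a N1 \<subseteq> {1..card (insert a N1)}"
    proof
      fix t assume "t \<in> \<sigma> ` insert a N1"
      then obtain x where x: "x \<in> insert a N1" "t = \<sigma> x" by blast
      show "t \<in> {1..card (insert a N1)}"
      proof (cases "x = a")
        case True then show ?thesis using x cI by (simp add: \<sigma>_def)
      next
        case False
        then have "x \<in> N1" using x by simp
        then have "\<sigma>1 x \<in> {1..card N1}" using b1 bij_betwE by (metis empty_iff)
        then show ?thesis using x False cI by (simp add: \<sigma>_def)
      qed
    qed
  qed simp
  have "Fb \<rho> (insert a N1) g \<le> Max ((\<lambda>v. real (\<sigma> v) * \<rho> + g v) ` insert a N1)"
    using bs assms by (intro Fb_le_witness) auto
  also have "\<dots> \<le> \<rho> + g a"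
  proof (rule Max.boundedI)
    show "finite ((\<lambda>v. real (\<sigma> v) * \<rho> + g v) ` insert a N1)" using assms by simp
    show "(\<lambda>v. real (\<sigma> v) * \<rho> + g v) ` insert a N1 \<noteq> {}" by simp
    fix t assume "t \<in> (\<lambda>v. real (\<sigma> v) * \<rho> + g v) ` insert a N1"
    then obtain x where x: "x \<in> insert a N1" "t = real (\<sigma> x) * \<rho> + g x" by blast
    show "t \<le> \<rho> + g a"
    proof (cases "x = a")
      case True then show ?thesis using x by (simp add: \<sigma>_def)
    next
      case False
      then have xN: "x \<in> N1" using x by simp
      then have ne: "N1 \<noteq> {}" by auto
      have "real (\<sigma>1 x) * \<rho> + g x \<le> Max ((\<lambda>v. real (\<sigma>1 v) * \<rho> + g v) ` N1)"
        using xN assms by (intro Max_ge) auto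
      also have "\<dots> = Fb \<rho> N1 g" using b1 ne by simp
      finally have "real (\<sigma>1 x) * \<rho> + g x \<le> g a" using assms(4) by linarith
      moreover have "t = \<rho> + (real (\<sigma>1 x) * \<rho> + g x)" using x False by (simp add: \<sigma>_def algebra_simps)
      ultimately show ?thesis by linarith
    qed
  qed
  finally show "Fb \<rho> (insert a N1) g \<le> \<rho> + g a" .
qed



lemma comp_subset: "comp E A v \<subseteq> insert v A"
proof
  fix x assume "x \<in> comp E A v"
  then have "(adj_in E A)\<^sup>*\<^sup>* v x" by (simp add: comp_def)
  then show "x \<in> insert v A" by (induction rule: rtranclp_induct) (auto simp: adj_in_def)
qed

lemma comp_self: "v \<in> comp E A v" by (simp add: comp_def)

lemma adj_in_rt_sym:
  assumes "\<forall>a b. E a b \<longrightarrow> E b a" "(adj_in E A)\<^sup>*\<^sup>* x y"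
  shows "(adj_in E A)\<^sup>*\<^sup>* y x"
  using assms(2)
proof (induction rule: rtranclp_induct)
  case base then show ?case by simp
next
  case (step y z)
  then have "adj_in E A z y" using assms(1) by (auto simp: adj_in_def)
  then show ?case using step.IH by (rule converse_rtranclp_into_rtranclp)
qed

lemma comp_trans:
  assumes "\<forall>a b. E a b \<longrightarrow> E b a" "z \<in> comp E A v"
  shows "comp E A z = comp E A v"
proof -
  have vz: "(adj_in E A)\<^sup>*\<^sup>* v z" and zv: "(adj_in E A)\<^sup>*\<^sup>* z v"
    using assms adj_in_rt_sym[OF assms(1)] by (auto simp: comp_def)
  show ?thesis unfolding comp_def using vz zv
    by (auto intro: rtranclp_trans)
qed

lemma bt_fuel:
  assumes irr: "\<forall>a b. E a b \<longrightarrow> a \<noteq> b"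
  shows "finite S \<Longrightarrow> u \<in> S \<Longrightarrow> card S \<le> n \<Longrightarrow> card S \<le> m \<Longrightarrow> bt E w \<rho> n u S = bt E w \<rho> m u S"
proof (induction n arbitrary: m u S)
  case 0
  then have "card S > 0" using card_gt_0_iff by blast
  then show ?case using 0 by simp
next
  case (Suc n)
  have "card S > 0" using Suc.prems card_gt_0_iff by blast
  then obtain m' where m: "m = Suc m'" using Suc.prems by (cases m) auto
  have eq: "Fb \<rho> {v\<in>S. E u v} (\<lambda>v. w u v + bt E w \<rho> n v (comp E (S - {u}) v))
      = Fb \<rho> {v\<in>S. E u v} (\<lambda>v. w u v + bt E w \<rho> m' v (comp E (S - {u}) v))"
  proof (rule Fb_cong)
    fix v assume v: "v \<in> {v\<in>S. E u v}"
    then have vu: "v \<in> S - {u}" using irr by auto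
    have sub: "comp E (S - {u}) v \<subseteq> S - {u}" using comp_subset[of E "S - {u}" v] vu by auto
    have fin: "finite (comp E (S - {u}) v)" using sub Suc.prems(1) finite_subset by blast
    have "card (comp E (S - {u}) v) \<le> card (S - {u})" using sub Suc.prems(1) by (intro card_mono) auto
    also have "\<dots> = card S - 1" using Suc.prems by simp
    finally have c: "card (comp E (S - {u}) v) \<le> card S - 1" .
    have "bt E w \<rho> n v (comp E (S - {u}) v) = bt E w \<rho> m' v (comp E (S - {u}) v)"
    proof -
      have c1: "card (comp E (S - {u}) v) \<le> n" using c Suc.prems by linarith
      have c2: "card (comp E (S - {u}) v) \<le> m'" using c Suc.prems m by linarith
      show ?thesis by (rule Suc.IH[OF fin comp_self c1 c2])
    qed
    then show "w u v + bt E w \<rho> n v (comp E (S - {u}) v) = w u v + bt E w \<rho> m' v (comp E (S - {u}) v)" by simp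
  qed
  have e1: "bt E w \<rho> (Suc n) u S = Fb \<rho> {v\<in>S. E u v} (\<lambda>v. w u v + bt E w \<rho> n v (comp E (S - {u}) v))"
    by (rule bt_Suc_Fb)
  have e2: "bt E w \<rho> m u S = Fb \<rho> {v\<in>S. E u v} (\<lambda>v. w u v + bt E w \<rho> m' v (comp E (S - {u}) v))"
    unfolding m by (rule bt_Suc_Fb)
  show ?case by (simp only: e1 e2 eq)
qed

lemma bcast_unfold:
  assumes irr: "\<forall>a b. E a b \<longrightarrow> a \<noteq> b" and S: "finite S" "u \<in> S"
  shows "bcast E w \<rho> u S = Fb \<rho> {v\<in>S. E u v} (\<lambda>v. w u v + bcast E w \<rho> v (comp E (S - {u}) v))"
proof -
  obtain n where n: "card S = Suc n" using S by (cases "card S") auto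
  have "bcast E w \<rho> u S = Fb \<rho> {v\<in>S. E u v} (\<lambda>v. w u v + bt E w \<rho> n v (comp E (S - {u}) v))"
    unfolding bcast_def n by (rule bt_Suc_Fb)
  also have "\<dots> = Fb \<rho> {v\<in>S. E u v} (\<lambda>v. w u v + bcast E w \<rho> v (comp E (S - {u}) v))"
  proof (rule Fb_cong)
    fix v assume v: "v \<in> {v\<in>S. E u v}"
    then have vu: "v \<in> S - {u}" using irr by auto
    have sub: "comp E (S - {u}) v \<subseteq> S - {u}" using comp_subset[of E "S - {u}" v] vu by auto
    have fin: "finite (comp E (S - {u}) v)" using sub S finite_subset by blast
    have "card (comp E (S - {u}) v) \<le> card (S - {u})" using sub S by (intro card_mono) auto
    also have "\<dots> = n" using S n by simp
    finally have c: "card (comp E (S - {u}) v) \<le> n" .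
    show "w u v + bt E w \<rho> n v (comp E (S - {u}) v) = w u v + bcast E w \<rho> v (comp E (S - {u}) v)"
      unfolding bcast_def using bt_fuel[OF irr fin comp_self c] by simp
  qed
  finally show ?thesis .
qed

lemma bt_nonneg:
  assumes wn: "\<forall>a b. E a b \<longrightarrow> w a b \<ge> 0" and rho: "\<rho> \<ge> 0"
  shows "finite S \<Longrightarrow> bt E w \<rho> n u S \<ge> 0"
proof (induction n arbitrary: u S)
  case 0 then show ?case by simp
next
  case (Suc n)
  show ?case unfolding bt_Suc_Fb
  proof (rule Fb_nonneg)
    show "finite {v \<in> S. E u v}" using Suc.prems by simp
    show "0 \<le> \<rho>" by (rule rho)
    fix v assume v: "v \<in> {v \<in> S. E u v}"
    have "finite (comp E (S - {u}) v)" using comp_subset[of E "S - {u}" v] Suc.prems finite_subset by blast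
    then show "0 \<le> w u v + bt E w \<rho> n v (comp E (S - {u}) v)" using Suc.IH wn v by fastforce
  qed
qed

lemma bcast_nonneg:
  assumes "\<forall>a b. E a b \<longrightarrow> w a b \<ge> 0" "\<rho> \<ge> 0" "finite S"
  shows "bcast E w \<rho> u S \<ge> 0"
  unfolding bcast_def using bt_nonneg[OF assms(1,2,3)] by blast



lemma edges_lower:
  fixes E' :: "'a \<Rightarrow> 'a \<Rightarrow> bool"
  assumes fin: "finite V" and ne: "V \<noteq> {}"
    and ed: "\<forall>a b. E' a b \<longrightarrow> a \<in> V \<and> b \<in> V \<and> a \<noteq> b"
    and con: "\<forall>a\<in>V. \<forall>b\<in>V. (adj_in E' V)\<^sup>*\<^sup>* a b"
  shows "card V - 1 \<le> card {{a, b} | a b. E' a b}"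
proof -
  obtain r where r: "r \<in> V" using ne by blast
  define R where "R = adj_in E' V"
  define d where "d z = (LEAST n. (R ^^ n) r z)" for z
  have dz: "(R ^^ d z) r z" if "z \<in> V" for z
  proof -
    have "\<exists>n. (R ^^ n) r z" using con r that rtranclp_imp_relpowp unfolding R_def by metis
    then show ?thesis unfolding d_def by (rule LeastI_ex)
  qed
  have par: "\<exists>y. R y z \<and> d y < d z" if "z \<in> V" "z \<noteq> r" for z
  proof -
    have "d z \<noteq> 0" using dz[OF that(1)] that(2) by (metis relpowp_0_E)
    then obtain k where k: "d z = Suc k" using not0_implies_Suc by blast
    then have "(R ^^ Suc k) r z" using dz[OF that(1)] by simp
    then obtain y where y: "(R ^^ k) r y" "R y z" by (rule relpowp_Suc_E)
    have "d y \<le> k" unfolding d_def using y(1) by (rule Least_le)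
    then show ?thesis using y k by auto
  qed
  define p where "p z = (SOME y. R y z \<and> d y < d z)" for z
  have pp: "R (p z) z \<and> d (p z) < d z" if "z \<in> V" "z \<noteq> r" for z
    unfolding p_def using par[OF that] by (rule someI_ex)
  define f where "f z = {z, p z}" for z
  have inj: "inj_on f (V - {r})"
  proof (rule inj_onI)
    fix z1 z2 assume z: "z1 \<in> V - {r}" "z2 \<in> V - {r}" "f z1 = f z2"
    show "z1 = z2"
    proof (rule ccontr)
      assume ne: "z1 \<noteq> z2"
      have "{z1, p z1} = {z2, p z2}" using z f_def by simp
      then have "z1 = p z2 \<and> p z1 = z2" using ne by (auto simp: doubleton_eq_iff)
      then show False using pp[of z1] pp[of z2] z by auto
    qed
  qed
  have img: "f ` (V - {r}) \<subseteq> {{a, b} | a b. E' a b}"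
  proof
    fix t assume "t \<in> f ` (V - {r})"
    then obtain z where z: "z \<in> V - {r}" "t = f z" by blast
    then have "E' (p z) z" using pp[of z] unfolding R_def adj_in_def by auto
    moreover have "t = {p z, z}" using z f_def by auto
    ultimately show "t \<in> {{a, b} | a b. E' a b}" by blast
  qed
  have "{{a, b} | a b. E' a b} \<subseteq> Pow V" using ed by auto
  then have finE: "finite {{a, b} | a b. E' a b}" using fin finite_subset by blast
  have "card (V - {r}) \<le> card {{a, b} | a b. E' a b}"
    using card_inj_on_le[OF inj img finE] .
  then show ?thesis using r fin by simp
qed

lemma is_path_Nil: "\<not> is_path E [] p q" by (simp add: is_path_def)

lemma is_path_single: "is_path E [a] p q \<longleftrightarrow> p = a \<and> q = a"
  by (auto simp: is_path_def)

lemma is_path_Cons: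
  assumes "xs \<noteq> []"
  shows "is_path E (a # xs) p q \<longleftrightarrow> a = p \<and> E a (hd xs) \<and> a \<notin> set xs \<and> is_path E xs (hd xs) q"
proof -
  obtain n where n: "length xs = Suc n" using assms by (cases xs) auto
  have "(\<forall>i < length (a # xs) - 1. E ((a # xs) ! i) ((a # xs) ! Suc i))
     \<longleftrightarrow> E a (hd xs) \<and> (\<forall>i < length xs - 1. E (xs ! i) (xs ! Suc i))"
    using n assms by (auto simp: less_Suc_eq_0_disj hd_conv_nth)
  then show ?thesis unfolding is_path_def using assms by auto
qed

lemma is_path_last: "is_path E xs p q \<Longrightarrow> q \<in> set xs \<and> p \<in> set xs"
  by (auto simp: is_path_def)

lemma path_walk:
  "is_path E xs p q \<Longrightarrow> set xs \<subseteq> A \<Longrightarrow> (adj_in E A)\<^sup>*\<^sup>* p q"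
proof (induction xs arbitrary: p)
  case Nil then show ?case by (simp add: is_path_Nil)
next
  case (Cons a xs)
  show ?case
  proof (cases "xs = []")
    case True then show ?thesis using Cons.prems by (simp add: is_path_single)
  next
    case False
    then have h: "a = p" "E a (hd xs)" "is_path E xs (hd xs) q" using Cons.prems is_path_Cons by metis+
    have "adj_in E A p (hd xs)" using h Cons.prems False unfolding adj_in_def by auto
    moreover have "(adj_in E A)\<^sup>*\<^sup>* (hd xs) q" using Cons.IH[OF h(3)] Cons.prems by auto
    ultimately show ?thesis by (rule converse_rtranclp_into_rtranclp)
  qed
qed

lemma path_drop:
  assumes "is_path E xs p q" "k < length xs"
  shows "is_path E (drop k xs) (xs ! k) q"
  using assms unfolding is_path_def
  by (auto simp: hd_drop_conv_nth last_drop nth_drop)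

lemma path_exists:
  assumes "(adj_in E V)\<^sup>*\<^sup>* p q"
  shows "\<exists>xs. is_path E xs p q"
  using assms
proof (induction rule: converse_rtranclp_induct)
  case base
  have "is_path E [q] q q" by (simp add: is_path_single)
  then show ?case by blast
next
  case (step p y)
  then obtain ys where ys: "is_path E ys y q" by blast
  show ?case
  proof (cases "p \<in> set ys")
    case True
    then obtain k where k: "k < length ys" "ys ! k = p" by (auto simp: in_set_conv_nth)
    then show ?thesis using path_drop[OF ys k(1)] by auto
  next
    case False
    have ne: "ys \<noteq> []" "hd ys = y" using ys by (auto simp: is_path_def)
    have "is_path E (p # ys) p q" using is_path_Cons[OF ne(1)] ne ys False step.hyps
      by (auto simp: adj_in_def)
    then show ?thesis by blast
  qed
qed

lemma path_in_V:
  assumes ed: "\<forall>a b. E a b \<longrightarrow> a \<in> V \<and> b \<in> V"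
  shows "is_path E xs p q \<Longrightarrow> length xs \<ge> 2 \<Longrightarrow> set xs \<subseteq> V"
proof (induction xs arbitrary: p)
  case Nil then show ?case by simp
next
  case (Cons a xs)
  then have ne: "xs \<noteq> []" by auto
  then have h: "a = p" "E a (hd xs)" "is_path E xs (hd xs) q" using Cons.prems is_path_Cons by metis+
  have "a \<in> V" "hd xs \<in> V" using h ed by auto
  moreover have "set xs \<subseteq> V"
  proof (cases "length xs \<ge> 2")
    case True then show ?thesis using Cons.IH[OF h(3)] by simp
  next
    case False
    have "length xs \<noteq> 0" using ne by simp
    then have "length xs = 1" using False by linarith
    then obtain b where "xs = [b]" by (cases xs) auto
    then show ?thesis using \<open>hd xs \<in> V\<close> by simp
  qed
  ultimately show ?case by simp
qed



locale tree_ctx =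
  fixes E :: "'a \<Rightarrow> 'a \<Rightarrow> bool" and V :: "'a set"
  assumes tree: "is_tree E V"
begin

lemma finV: "finite V" and neV: "V \<noteq> {}"
  and edge: "E a b \<Longrightarrow> a \<in> V \<and> b \<in> V \<and> a \<noteq> b \<and> E b a"
  and conn: "a \<in> V \<Longrightarrow> b \<in> V \<Longrightarrow> (adj_in E V)\<^sup>*\<^sup>* a b"
  and cardE: "card {{a, b} | a b. E a b} = card V - 1"
  using tree unfolding is_tree_def by auto

lemma symE: "\<forall>a b. E a b \<longrightarrow> E b a" using edge by blast
lemma irrE: "\<forall>a b. E a b \<longrightarrow> a \<noteq> b" using edge by blast
lemma edV: "\<forall>a b. E a b \<longrightarrow> a \<in> V \<and> b \<in> V" using edge by blast

lemma bridge:
  assumes ab: "E a b"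
  shows "\<not> (adj_in (\<lambda>x y. E x y \<and> {x, y} \<noteq> {a, b}) V)\<^sup>*\<^sup>* a b"
proof
  define E2 where "E2 = (\<lambda>x y. E x y \<and> {x, y} \<noteq> {a, b})"
  assume h: "(adj_in (\<lambda>x y. E x y \<and> {x, y} \<noteq> {a, b}) V)\<^sup>*\<^sup>* a b"
  then have h1: "(adj_in E2 V)\<^sup>*\<^sup>* a b" unfolding E2_def .
  have symE2: "\<forall>x y. E2 x y \<longrightarrow> E2 y x" unfolding E2_def using symE by (auto simp: insert_commute)
  have h2: "(adj_in E2 V)\<^sup>*\<^sup>* b a" using adj_in_rt_sym[OF symE2 h1] .
  have con2: "(adj_in E2 V)\<^sup>*\<^sup>* p q" if "p \<in> V" "q \<in> V" for p q
  proof -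
    have "(adj_in E V)\<^sup>*\<^sup>* p q" using conn that .
    then show ?thesis
    proof (induction rule: rtranclp_induct)
      case base then show ?case by simp
    next
      case (step y z)
      show ?case
      proof (cases "{y, z} = {a, b}")
        case True
        then have "(y = a \<and> z = b) \<or> (y = b \<and> z = a)" by (auto simp: doubleton_eq_iff)
        then have "(adj_in E2 V)\<^sup>*\<^sup>* y z" using h1 h2 by auto
        then show ?thesis using step.IH by (rule rtranclp_trans[rotated])
      next
        case False
        then have "adj_in E2 V y z" using step.hyps(2) unfolding adj_in_def E2_def by auto
        then show ?thesis using step.IH by (rule rtranclp.rtrancl_into_rtrancl[rotated])
      qed
    qed
  qed
  have edges2: "{{x, y} | x y. E2 x y} = {{x, y} | x y. E x y} - {{a, b}}"
    unfolding E2_def by blast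
  have finE: "finite {{x, y} | x y. E x y}"
  proof -
    have "{{x, y} | x y. E x y} \<subseteq> Pow V" using edge by auto
    then show ?thesis using finV finite_subset by blast
  qed
  have abin: "{a, b} \<in> {{x, y} | x y. E x y}" using ab by blast
  have c2: "card {{x, y} | x y. E2 x y} = card V - 2"
    unfolding edges2 using card_Diff_singleton[OF abin] cardE by simp
  have "card V - 1 \<le> card {{x, y} | x y. E2 x y}"
    by (rule edges_lower[OF finV neV]) (use edge con2 in \<open>auto simp: E2_def\<close>)
  moreover have "card V \<ge> 2"
  proof -
    have "{a, b} \<subseteq> V" "card {a, b} = 2" using edge[OF ab] by auto
    then show ?thesis using card_mono[OF finV] by metis
  qed
  ultimately show False using c2 by simp
qed

lemma no_cycle:
  assumes "E b a" "E b c" "a \<noteq> c"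
  shows "a \<notin> comp E (V - {b}) c"
proof
  assume "a \<in> comp E (V - {b}) c"
  then have w: "(adj_in E (V - {b}))\<^sup>*\<^sup>* c a" by (simp add: comp_def)
  define E2 where "E2 = (\<lambda>x y. E x y \<and> {x, y} \<noteq> {b, a})"
  have "(adj_in E2 V)\<^sup>*\<^sup>* c a"
    using w by (rule rtranclp_mono[THEN predicate2D, rotated]) (auto simp: adj_in_def E2_def doubleton_eq_iff)
  moreover have "adj_in E2 V b c" using assms edge unfolding adj_in_def E2_def by (auto simp: doubleton_eq_iff)
  ultimately have "(adj_in E2 V)\<^sup>*\<^sup>* b a" by (rule converse_rtranclp_into_rtranclp[rotated])
  then show False using bridge[OF assms(1)] unfolding E2_def by blast
qed

lemma Tsub_sub: "Tsub E V a b \<subseteq> insert b (V - {a})"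
  unfolding Tsub_def by (rule comp_subset)

lemma Tsub_self: "b \<in> Tsub E V a b" unfolding Tsub_def by (rule comp_self)

lemma split_edge:
  assumes ab: "E a b"
  shows "V - Tsub E V a b = Tsub E V b a"
proof
  have cover: "z \<in> Tsub E V b a \<or> z \<in> Tsub E V a b" if "z \<in> V" for z
  proof -
    have "(adj_in E V)\<^sup>*\<^sup>* a z" using conn edge[OF ab] that by blast
    then show ?thesis
    proof (induction rule: rtranclp_induct)
      case base then show ?case using Tsub_self by blast
    next
      case (step y z)
      show ?case
      proof (cases "y \<in> Tsub E V b a")
        case True
        show ?thesis
        proof (cases "z = b")
          case True then show ?thesis using Tsub_self by blast
        next
          case False
          then have "adj_in E (V - {b}) y z" using step.hyps(2) True Tsub_sub[of b a] edge[OF ab]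
            by (auto simp: adj_in_def)
          then show ?thesis using True unfolding Tsub_def comp_def
            by (auto intro: rtranclp.rtrancl_into_rtrancl)
        qed
      next
        case yF: False
        then have yT: "y \<in> Tsub E V a b" using step.IH by blast
        show ?thesis
        proof (cases "z = a")
          case True then show ?thesis using Tsub_self by blast
        next
          case False
          then have "adj_in E (V - {a}) y z" using step.hyps(2) yT Tsub_sub[of a b] edge[OF ab]
            by (auto simp: adj_in_def)
          then show ?thesis using yT unfolding Tsub_def comp_def
            by (auto intro: rtranclp.rtrancl_into_rtrancl)
        qed
      qed
    qed
  qed
  then show "V - Tsub E V a b \<subseteq> Tsub E V b a" by blast
next
  have disj: "False" if z1: "z \<in> Tsub E V a b" and z2: "z \<in> Tsub E V b a" for z
  proof -
    define E2 where "E2 = (\<lambda>x y. E x y \<and> {x, y} \<noteq> {a, b})"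
    have w1: "(adj_in E (V - {a}))\<^sup>*\<^sup>* b z" using z1 unfolding Tsub_def comp_def by simp
    have w2: "(adj_in E (V - {b}))\<^sup>*\<^sup>* a z" using z2 unfolding Tsub_def comp_def by simp
    have "(adj_in E2 V)\<^sup>*\<^sup>* b z"
      using w1 by (rule rtranclp_mono[THEN predicate2D, rotated]) (auto simp: adj_in_def E2_def doubleton_eq_iff)
    moreover have "(adj_in E2 V)\<^sup>*\<^sup>* a z"
      using w2 by (rule rtranclp_mono[THEN predicate2D, rotated]) (auto simp: adj_in_def E2_def doubleton_eq_iff)
    moreover have "\<forall>x y. E2 x y \<longrightarrow> E2 y x" unfolding E2_def using symE by (auto simp: insert_commute)
    ultimately have "(adj_in E2 V)\<^sup>*\<^sup>* a b" using adj_in_rt_sym by (metis rtranclp_trans)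
    then show False using bridge[OF ab] unfolding E2_def by blast
  qed
  have "Tsub E V b a \<subseteq> V" using Tsub_sub[of b a] edge[OF ab] by auto
  then show "Tsub E V b a \<subseteq> V - Tsub E V a b" using disj by blast
qed

lemma sub_comp:
  assumes ab: "E a b" and bc: "E b c" and ca: "c \<noteq> a"
  shows "comp E (Tsub E V a b - {b}) c = Tsub E V b c"
proof
  have "Tsub E V a b \<subseteq> V" using Tsub_sub[of a b] edge[OF ab] by auto
  then show "comp E (Tsub E V a b - {b}) c \<subseteq> Tsub E V b c"
    unfolding Tsub_def comp_def
    by (auto intro: rtranclp_mono[THEN predicate2D, rotated] simp: adj_in_def)
next
  have anot: "a \<notin> Tsub E V b c" unfolding Tsub_def using no_cycle edge ab bc ca by blast
  have inT: "y \<in> Tsub E V a b" if "y \<in> Tsub E V b c" for y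
  proof -
    have "(adj_in E (V - {b}))\<^sup>*\<^sup>* c y" using that unfolding Tsub_def comp_def by simp
    then have "(adj_in E (V - {a}))\<^sup>*\<^sup>* b y"
    proof (induction rule: rtranclp_induct)
      case base
      have "adj_in E (V - {a}) b c" using edge ab bc ca unfolding adj_in_def by auto
      then show ?case by blast
    next
      case (step y z)
      have "z \<in> Tsub E V b c" "y \<in> Tsub E V b c" using step.hyps unfolding Tsub_def comp_def
        by (auto intro: rtranclp.rtrancl_into_rtrancl)
      then have "z \<noteq> a" "y \<noteq> a" using anot by auto
      then have "adj_in E (V - {a}) y z" using step.hyps(2) by (auto simp: adj_in_def)
      then show ?case using step.IH by (rule rtranclp.rtrancl_into_rtrancl[rotated])
    qed
    then show ?thesis unfolding Tsub_def comp_def by simp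
  qed
  show "Tsub E V b c \<subseteq> comp E (Tsub E V a b - {b}) c"
  proof
    fix z assume "z \<in> Tsub E V b c"
    then have "(adj_in E (V - {b}))\<^sup>*\<^sup>* c z" unfolding Tsub_def comp_def by simp
    then have "(adj_in E (Tsub E V a b - {b}))\<^sup>*\<^sup>* c z"
    proof (induction rule: rtranclp_induct)
      case base then show ?case by simp
    next
      case (step y z)
      have "z \<in> Tsub E V b c" "y \<in> Tsub E V b c" using step.hyps unfolding Tsub_def comp_def
        by (auto intro: rtranclp.rtrancl_into_rtrancl)
      then have "z \<in> Tsub E V a b" "y \<in> Tsub E V a b" using inT by auto
      then have "adj_in E (Tsub E V a b - {b}) y z" using step.hyps(2) by (auto simp: adj_in_def)
      then show ?case using step.IH by (rule rtranclp.rtrancl_into_rtrancl[rotated])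
    qed
    then show "z \<in> comp E (Tsub E V a b - {b}) c" unfolding comp_def by simp
  qed
qed

lemma path_unique:
  "is_path E xs p q \<Longrightarrow> is_path E ys p q \<Longrightarrow> xs = ys"
proof (induction xs arbitrary: p ys)
  case Nil then show ?case by (simp add: is_path_Nil)
next
  case (Cons a xs)
  obtain b ys' where ys: "ys = b # ys'" using Cons.prems(2) by (cases ys) (auto simp: is_path_Nil)
  show ?case
  proof (cases "xs = []")
    case True
    then have "a = p" "q = p" using Cons.prems(1) by (auto simp: is_path_single)
    show ?thesis
    proof (cases "ys' = []")
      case True then show ?thesis using ys Cons.prems \<open>xs = []\<close> by (auto simp: is_path_single)
    next
      case False
      then have "b \<notin> set ys'" "is_path E ys' (hd ys') q" "b = p"
        using Cons.prems(2) ys is_path_Cons by metis+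
      then show ?thesis using is_path_last \<open>q = p\<close> by metis
    qed
  next
    case xF: False
    have hx: "a = p" "E a (hd xs)" "a \<notin> set xs" "is_path E xs (hd xs) q"
      using Cons.prems(1) is_path_Cons[OF xF] by metis+
    show ?thesis
    proof (cases "ys' = []")
      case True
      then have "q = p" using ys Cons.prems(2) by (auto simp: is_path_single)
      then show ?thesis using hx is_path_last by metis
    next
      case yF: False
      have hy: "b = p" "E b (hd ys')" "b \<notin> set ys'" "is_path E ys' (hd ys') q"
        using Cons.prems(2) ys is_path_Cons[OF yF] by metis+
      show ?thesis
      proof (cases "hd xs = hd ys'")
        case True
        then show ?thesis using Cons.IH[OF hx(4)] hy hx ys by simp
      next
        case False
        have "set (a # xs) \<subseteq> V" using path_in_V[OF edV Cons.prems(1)] xF by (cases xs) auto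
        then have sx: "set xs \<subseteq> V - {p}" using hx by auto
        have "set (b # ys') \<subseteq> V" using path_in_V[OF edV Cons.prems(2)[unfolded ys]] yF by (cases ys') auto
        then have sy: "set ys' \<subseteq> V - {p}" using hy by auto
        have "q \<in> comp E (V - {p}) (hd xs)" using path_walk[OF hx(4) sx] by (simp add: comp_def)
        moreover have "q \<in> comp E (V - {p}) (hd ys')" using path_walk[OF hy(4) sy] by (simp add: comp_def)
        ultimately have "hd ys' \<in> comp E (V - {p}) (hd xs)"
          using comp_trans[OF symE] comp_self by metis
        then show ?thesis using no_cycle[of p "hd ys'" "hd xs"] hx hy False by auto
      qed
    qed
  qed
qed

lemma tpath_is_path:
  assumes "a \<in> V" "b \<in> V"
  shows "is_path E (tpath E a b) a b"
proof -
  have "\<exists>!xs. is_path E xs a b" using path_exists[OF conn[OF assms]] path_unique by blast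
  then show ?thesis unfolding tpath_def by (rule theI')
qed

end


locale bc_ctx = tree_ctx E V for E :: "'a \<Rightarrow> 'a \<Rightarrow> bool" and V +
  fixes w :: "'a \<Rightarrow> 'a \<Rightarrow> real" and \<rho> :: real and \<kappa> :: 'a
  assumes wn: "\<forall>a b. E a b \<longrightarrow> w a b \<ge> 0"
    and ws: "\<forall>a b. E a b \<longrightarrow> w a b = w b a"
    and rho: "\<rho> > 0"
    and kV: "\<kappa> \<in> V"
    and prime: "\<forall>u. E \<kappa> u \<longrightarrow> bcast E w \<rho> \<kappa> (Tbar E V \<kappa> u) \<ge> bcast E w \<rho> u (Tbar E V u \<kappa>)"
begin

definition region :: "'a \<Rightarrow> 'a set \<Rightarrow> bool" where
  "region y S \<longleftrightarrow> S \<subseteq> V \<and> y \<in> S \<and> (\<forall>v\<in>S. E y v \<longrightarrow> comp E (S - {y}) v = Tsub E V y v)"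

definition g :: "'a \<Rightarrow> 'a \<Rightarrow> real" where
  "g y v = w y v + bcast E w \<rho> v (Tsub E V y v)"

definition W :: "'a list \<Rightarrow> real" where
  "W zs = (\<Sum>i<length zs - 1. w (zs ! i) (zs ! Suc i))"

lemma TV: "E a b \<Longrightarrow> Tsub E V a b \<subseteq> V"
  using Tsub_sub[of a b] edge[of a b] by auto

lemma bcast_region:
  assumes "region y S"
  shows "bcast E w \<rho> y S = Fb \<rho> {v\<in>S. E y v} (g y)"
proof -
  have fin: "finite S" using assms finV finite_subset unfolding region_def by blast
  have "bcast E w \<rho> y S = Fb \<rho> {v\<in>S. E y v} (\<lambda>v. w y v + bcast E w \<rho> v (comp E (S - {y}) v))"
    using bcast_unfold[OF irrE fin] assms unfolding region_def by blast
  also have "\<dots> = Fb \<rho> {v\<in>S. E y v} (g y)"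
    by (rule Fb_cong) (use assms in \<open>auto simp: region_def g_def\<close>)
  finally show ?thesis .
qed

lemma region_V: "y \<in> V \<Longrightarrow> region y V"
  unfolding region_def Tsub_def by auto

lemma region_T:
  assumes py: "E p y"
  shows "region y (Tsub E V p y)"
  unfolding region_def
proof (intro conjI ballI impI)
  show "Tsub E V p y \<subseteq> V" using TV[OF py] .
  show "y \<in> Tsub E V p y" by (rule Tsub_self)
  fix v assume v: "v \<in> Tsub E V p y" "E y v"
  have "v \<noteq> p" using v(1) Tsub_sub[of p y] edge[OF py] by auto
  then show "comp E (Tsub E V p y - {y}) v = Tsub E V y v" using sub_comp[OF py v(2)] by simp
qed

lemma nbr_T:
  assumes py: "E p y"
  shows "{v \<in> Tsub E V p y. E y v} = {v \<in> V. E y v} - {p}"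
proof
  show "{v \<in> Tsub E V p y. E y v} \<subseteq> {v \<in> V. E y v} - {p}"
    using TV[OF py] Tsub_sub[of p y] edge[OF py] by auto
  show "{v \<in> V. E y v} - {p} \<subseteq> {v \<in> Tsub E V p y. E y v}"
  proof
    fix v assume v: "v \<in> {v \<in> V. E y v} - {p}"
    then have "adj_in E (V - {p}) y v" using edge[OF py] edge[of y v] by (auto simp: adj_in_def)
    then have "v \<in> Tsub E V p y" unfolding Tsub_def comp_def by auto
    then show "v \<in> {v \<in> Tsub E V p y. E y v}" using v by simp
  qed
qed

lemma g_nonneg: "E y v \<Longrightarrow> g y v \<ge> 0"
proof -
  assume e: "E y v"
  have "finite (Tsub E V y v)" using TV[OF e] finV finite_subset by blast
  then have "bcast E w \<rho> v (Tsub E V y v) \<ge> 0" by (intro bcast_nonneg[OF wn]) (use rho in auto)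
  then show ?thesis unfolding g_def using wn e by simp
qed

lemma lower:
  assumes "region y S" "v \<in> S" "E y v"
  shows "bcast E w \<rho> y S \<ge> \<rho> + g y v"
proof -
  have fin: "finite S" using assms finV finite_subset unfolding region_def by blast
  show ?thesis unfolding bcast_region[OF assms(1)]
    by (rule Fb_lower) (use fin assms rho in auto)
qed

lemma step:
  assumes reg: "region y S" and n: "n \<in> S" "E y n" and Q: "bcast E w \<rho> y (Tsub E V n y) \<le> g y n"
  shows "bcast E w \<rho> y S = \<rho> + g y n"
proof -
  have fin: "finite S" using reg finV finite_subset unfolding region_def by blast
  let ?N = "{v\<in>S. E y v}"
  have "Fb \<rho> (?N - {n}) (g y) \<le> Fb \<rho> ({v \<in> V. E y v} - {n}) (g y)"
  proof (rule Fb_mono)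
    show "finite ({v \<in> V. E y v} - {n})" using finV by simp
    show "?N - {n} \<subseteq> {v \<in> V. E y v} - {n}" using reg unfolding region_def by auto
    show "0 \<le> \<rho>" using rho by simp
    show "\<And>v. v \<in> {v \<in> V. E y v} - {n} \<Longrightarrow> 0 \<le> g y v" using g_nonneg by auto
  qed
  also have "\<dots> = bcast E w \<rho> y (Tsub E V n y)"
    using bcast_region[OF region_T[of n y]] nbr_T[of n y] n symE by auto
  also have "\<dots> \<le> g y n" by (rule Q)
  finally have le: "Fb \<rho> (?N - {n}) (g y) \<le> g y n" .
  have "?N = insert n (?N - {n})" using n by auto
  then have "bcast E w \<rho> y S = Fb \<rho> (insert n (?N - {n})) (g y)" using bcast_region[OF reg] by simp
  also have "\<dots> = \<rho> + g y n" by (rule Fb_add_first) (use fin le rho in auto)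
  finally show ?thesis .
qed

lemma W_cons2: "W (y # n # ys) = w y n + W (n # ys)"
  unfolding W_def by (simp add: sum.lessThan_Suc_shift del: sum.lessThan_Suc)

lemma main:
  "ys \<noteq> [] \<Longrightarrow> is_path E (y # ys) y \<kappa> \<Longrightarrow>
     bcast E w \<rho> y (Tsub E V (hd ys) y) \<le> g y (hd ys) \<and>
     (\<forall>S. region y S \<longrightarrow> hd ys \<in> S \<longrightarrow>
        bcast E w \<rho> y S = real (length ys) * \<rho> + W (y # ys) + bcast E w \<rho> \<kappa> (V - Tsub E V \<kappa> y))"
proof (induction ys arbitrary: y)
  case Nil then show ?case by simp
next
  case (Cons n ys')
  have h: "E y n" "y \<notin> set (n # ys')" "is_path E (n # ys') n \<kappa>"
    using Cons.prems(2) is_path_Cons[of "n # ys'" E y y \<kappa>] by auto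
  show ?case
  proof (cases "ys' = []")
    case True
    then have nk: "n = \<kappa>" using h(3) by (simp add: is_path_single)
    have eyk: "E y \<kappa>" using h nk by simp
    have eky: "E \<kappa> y" using edge[OF eyk] by simp
    have t1: "Tbar E V \<kappa> y = Tsub E V y \<kappa>" unfolding Tbar_def using split_edge[OF eky] .
    have t2: "Tbar E V y \<kappa> = Tsub E V \<kappa> y" unfolding Tbar_def using split_edge[OF eyk] .
    have "bcast E w \<rho> y (Tsub E V \<kappa> y) \<le> bcast E w \<rho> \<kappa> (Tsub E V y \<kappa>)"
      using prime eky t1 t2 by metis
    also have "\<dots> \<le> g y \<kappa>" unfolding g_def using wn eyk by simp
    finally have Q: "bcast E w \<rho> y (Tsub E V \<kappa> y) \<le> g y \<kappa>" .
    show ?thesis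
    proof (intro conjI allI impI)
      show "bcast E w \<rho> y (Tsub E V (hd (n # ys')) y) \<le> g y (hd (n # ys'))" using Q nk by simp
      fix S assume S: "region y S" "hd (n # ys') \<in> S"
      have "bcast E w \<rho> y S = \<rho> + g y \<kappa>" using step[OF S(1) _ eyk Q] S(2) nk by simp
      moreover have "W (y # n # ys') = w y \<kappa>" using True nk by (simp add: W_def)
      moreover have "V - Tsub E V \<kappa> y = Tsub E V y \<kappa>" using split_edge[OF eky] .
      ultimately show "bcast E w \<rho> y S = real (length (n # ys')) * \<rho> + W (y # n # ys') + bcast E w \<rho> \<kappa> (V - Tsub E V \<kappa> y)"
        using True by (simp add: g_def)
    qed
  next
    case False
    define n2 where "n2 = hd ys'"
    have IH: "bcast E w \<rho> n (Tsub E V n2 n) \<le> g n n2"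
      "\<And>S. region n S \<Longrightarrow> n2 \<in> S \<Longrightarrow>
        bcast E w \<rho> n S = real (length ys') * \<rho> + W (n # ys') + bcast E w \<rho> \<kappa> (V - Tsub E V \<kappa> n)"
      using Cons.IH[OF False h(3)] unfolding n2_def by auto
    have h2: "E n n2" "n \<notin> set ys'" "is_path E ys' n2 \<kappa>"
      using h(3) is_path_Cons[OF False, of E n n \<kappa>] unfolding n2_def by auto
    have n2ys: "n2 \<in> set ys'" using False n2_def by simp
    have yn2: "y \<noteq> n2" using h(2) n2ys by auto
    have kys: "\<kappa> \<in> set ys'" using h2(3) is_path_last by metis
    have yk: "y \<noteq> \<kappa>" using h(2) kys by auto
    have nk: "n \<noteq> \<kappa>" using h2(2) kys by auto
    have eny: "E n y" using edge[OF h(1)] by simp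
    have en2n: "E n2 n" using edge[OF h2(1)] by simp
    have a1: "bcast E w \<rho> n (Tsub E V n2 n) \<ge> \<rho> + g n y"
    proof (rule lower[OF region_T[OF en2n] _ eny])
      show "y \<in> Tsub E V n2 n" using nbr_T[of n2 n] edge[OF h2(1)] eny edge[OF h(1)] yn2 by auto
    qed
    have a3: "bcast E w \<rho> n (Tsub E V y n) \<ge> \<rho> + g n n2"
    proof (rule lower[OF region_T[OF h(1)] _ h2(1)])
      show "n2 \<in> Tsub E V y n" using nbr_T[of y n] h(1) edge[OF h(1)] h2(1) edge[OF h2(1)] yn2 by auto
    qed
    have wyn: "w n y = w y n" "w y n \<ge> 0" using ws wn h(1) eny by auto
    have Q: "bcast E w \<rho> y (Tsub E V n y) \<le> g y n"
      using a1 a3 IH(1) wyn rho unfolding g_def by linarith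
    show ?thesis
    proof (intro conjI allI impI)
      show "bcast E w \<rho> y (Tsub E V (hd (n # ys')) y) \<le> g y (hd (n # ys'))" using Q by simp
      fix S assume S: "region y S" "hd (n # ys') \<in> S"
      have e1: "bcast E w \<rho> y S = \<rho> + w y n + bcast E w \<rho> n (Tsub E V y n)"
        using step[OF S(1) _ h(1) Q] S(2) by (simp add: g_def)
      have n2T: "n2 \<in> Tsub E V y n" using nbr_T[of y n] h(1) edge[OF h(1)] h2(1) edge[OF h2(1)] yn2 by auto
      have e2: "bcast E w \<rho> n (Tsub E V y n) = real (length ys') * \<rho> + W (n # ys') + bcast E w \<rho> \<kappa> (V - Tsub E V \<kappa> n)"
        using IH(2)[OF region_T[OF h(1)] n2T] .
      have "n \<in> Tsub E V \<kappa> y"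
      proof -
        have "adj_in E (V - {\<kappa>}) y n" using h(1) edge[OF h(1)] yk nk by (auto simp: adj_in_def)
        then show ?thesis unfolding Tsub_def comp_def by auto
      qed
      then have e3: "Tsub E V \<kappa> n = Tsub E V \<kappa> y" unfolding Tsub_def by (rule comp_trans[OF symE])
      show "bcast E w \<rho> y S = real (length (n # ys')) * \<rho> + W (y # n # ys') + bcast E w \<rho> \<kappa> (V - Tsub E V \<kappa> y)"
        using e1 e2 e3 W_cons2[of y n ys'] by (simp add: algebra_simps)
    qed
  qed
qed

end


theorem lemma4:
  fixes E :: "'a \<Rightarrow> 'a \<Rightarrow> bool" and V :: "'a set"
    and wlo whi w :: "'a \<Rightarrow> 'a \<Rightarrow> real" and \<rho> :: real and k x :: 'a
  assumes tree: "is_tree E V"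
    and intervals: "\<forall>a b. E a b \<longrightarrow> 0 \<le> wlo a b \<and> wlo a b \<le> whi a b
                        \<and> wlo a b = wlo b a \<and> whi a b = whi b a"
    and rho: "\<rho> > 0"
    and scen: "scenario E wlo whi w"
    and prime: "prime_center E w \<rho> V k"
    and x: "x \<in> V" "x \<noteq> k"
  shows "bcast E w \<rho> x V
           = real (tdist E x k) * \<rho> + pweight E w x k + bcast E w \<rho> k (Tbar E V k x)"
proof -
  have kV: "k \<in> V" using prime unfolding prime_center_def bcenters_def by auto
  have pr: "\<forall>u. E k u \<longrightarrow> bcast E w \<rho> k (Tbar E V k u) \<ge> bcast E w \<rho> u (Tbar E V u k)"
    using prime unfolding prime_center_def by auto
  have wn: "\<forall>a b. E a b \<longrightarrow> w a b \<ge> 0" using intervals scen unfolding scenario_def by force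
  have ws: "\<forall>a b. E a b \<longrightarrow> w a b = w b a" using scen unfolding scenario_def by blast
  interpret bc_ctx E V w \<rho> k
    by (unfold_locales) (use tree wn ws rho kV pr in auto)
  define zs where "zs = tpath E x k"
  have zp: "is_path E zs x k" unfolding zs_def by (rule tpath_is_path[OF x(1) kV])
  obtain ys where zs: "zs = x # ys" using zp by (cases zs) (auto simp: is_path_def)
  have ysne: "ys \<noteq> []" using zp zs x(2) by (auto simp: is_path_single)
  have hd: "hd ys \<in> V" using zp zs ysne is_path_Cons[OF ysne, of E x x k] edge by blast
  have "bcast E w \<rho> x V = real (length ys) * \<rho> + W (x # ys) + bcast E w \<rho> k (V - Tsub E V k x)"
    using main[OF ysne zp[unfolded zs]] region_V[OF x(1)] hd by blast
  moreover have "tdist E x k = length ys" unfolding tdist_def zs_def[symmetric] zs by simp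
  moreover have "pweight E w x k = W (x # ys)" unfolding pweight_def W_def zs_def[symmetric] zs Let_def by simp
  moreover have "Tbar E V k x = V - Tsub E V k x" unfolding Tbar_def ..
  ultimately show ?thesis by simp
qed


end
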